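(* Let $\epsilon:[0,\infty)\to\mathbb{R}$ be a differentiable function with $\epsilon(t)>0$ and $\dot\epsilon(t)<0$ for all $t$, and $\lim_{t\to\infty}\dot\epsilon(t)\,\epsilon^{-2}(t)=0$. Then $\lim_{t\to\infty}e^{-t}\epsilon^{-1}(t)=0$. *)

theory Defs
  imports "HOL-Analysis.Analysis"
begin

end

theory Submission
  imports Defs "HOL-Real_Asymp.Real_Asymp"
begin

theorem lemma2:
  fixes eps eps' :: "real \<Rightarrow> real"
  assumes deriv: "\<And>t. t \<ge> 0 \<Longrightarrow> (eps has_real_derivative eps' t) (at t within {0..})"
    and pos: "\<And>t. t \<ge> 0 \<Longrightarrow> eps t > 0"
    and dec: "\<And>t. t \<ge> 0 \<Longrightarrow> eps' t < 0"
    and lim: "((\<lambda>t. eps' t / (eps t)^2) \<longlongrightarrow> 0) at_top"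
  shows "((\<lambda>t. exp (- t) / eps t) \<longlongrightarrow> 0) at_top"
proof -
  have "eventually (\<lambda>t. dist (eps' t / (eps t)^2) 0 < 1) at_top"
    using lim by (rule tendstoD) simp
  then obtain T0 where T0: "\<And>t. t \<ge> T0 \<Longrightarrow> \<bar>eps' t / (eps t)^2\<bar> < 1"
    by (auto simp: eventually_at_top_linorder)
  define T where "T = max T0 1"
  have dg: "((\<lambda>x. x - inverse (eps x)) has_real_derivative (1 - (- (eps' t * inverse (eps t ^ 2))))) (at t)"
    if "t > 0" for t
  proof -
    have "at t within {0..} = at t"
      by (rule at_within_interior) (use that in auto)
    hence "(eps has_real_derivative eps' t) (at t)" using deriv[of t] that by simp
    from DERIV_inverse_fun[OF this] have "((\<lambda>x. inverse (eps x)) has_real_derivative (- (eps' t * inverse (eps t ^ Suc (Suc 0))))) (at t)"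
      using pos[of t] that by force
    hence "((\<lambda>x. inverse (eps x)) has_real_derivative (- (eps' t * inverse (eps t ^ 2)))) (at t)"
      by (simp add: numeral_2_eq_2)
    thus ?thesis by (intro derivative_intros)
  qed
  have bound: "inverse (eps t) \<le> inverse (eps T) - T + t" if "t \<ge> T" for t
  proof -
    have "T - inverse (eps T) \<le> t - inverse (eps t)"
    proof (rule DERIV_nonneg_imp_nondecreasing[OF that])
      fix x assume x: "T \<le> x" "x \<le> t"
      hence "x > 0" "x \<ge> T0" unfolding T_def by auto
      have "eps' x * inverse (eps x ^ 2) = eps' x / (eps x)^2" by (simp add: field_simps)
      hence "0 \<le> 1 - (- (eps' x * inverse (eps x ^ 2)))" using T0[OF \<open>x \<ge> T0\<close>] by linarith
      thus "\<exists>y. ((\<lambda>x. x - inverse (eps x)) has_real_derivative y) (at x) \<and> 0 \<le> y"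
        using dg[OF \<open>x > 0\<close>] by blast
    qed
    thus ?thesis by linarith
  qed
  have lim2: "((\<lambda>t. exp (- t) * (inverse (eps T) - T + t)) \<longlongrightarrow> 0) at_top"
    by real_asymp
  show ?thesis
  proof (rule tendsto_sandwich[OF _ _ tendsto_const lim2])
    show "eventually (\<lambda>t. 0 \<le> exp (- t) / eps t) at_top"
      using eventually_ge_at_top[of 0] by eventually_elim (use pos in \<open>auto intro: less_imp_le\<close>)
    show "eventually (\<lambda>t. exp (- t) / eps t \<le> exp (- t) * (inverse (eps T) - T + t)) at_top"
      using eventually_ge_at_top[of T]
    proof eventually_elim
      case (elim t)
      have "exp (- t) / eps t = exp (- t) * inverse (eps t)" by (simp add: field_simps)
      also have "\<dots> \<le> exp (- t) * (inverse (eps T) - T + t)"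
        using bound[OF elim] by (intro mult_left_mono) auto
      finally show ?case .
    qed
  qed
qed

end
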